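(* There exists an MDP $M$ and a policy class $\Pi\subset\Pi_{\mathrm{RNS}}$ with horizon $H=1$ such that $C^M_{\infty;h}\le 2$ (and hence $\mathsf{Cov}^M_{h,\varepsilon}\le2$ as well), yet for all $\varepsilon>0$, $$\inf_{p\in\Delta(\Pi)}\Psi^M_{\infty;h,\varepsilon}(p)\ge\frac{1}{\varepsilon},$$ and in particular $\inf_{p\in\Delta(\Pi)}\Psi^M_{\infty;h,0}(p)=\infty$.
   Context: Episodic reward-free MDP (countable states $\mathcal{X}$, actions $\mathcal{A}$, horizon $H$); $\Pi_{\mathrm{RNS}}$ randomized non-stationary policies; $d^{M,\pi}_h(x,a)$ layer-$h$ occupancy, $d^{M,p}_h=\mathbb{E}_{\pi\sim p}d^{M,\pi}_h$. Definitions: $C^M_{\infty;h}=\inf_{\mu\in\Delta(\mathcal{X}\times\mathcal{A})}\sup_{\pi\in\Pi}\sup_{(x,a)}\frac{d^{M,\pi}_h(x,a)}{\mu(x,a)}$; $\mathsf{Cov}^M_{h,\varepsilon}=\inf_{p\in\Delta(\Pi)}\sup_{\pi\in\Pi}\mathbb{E}^{M,\pi}\big[\frac{d^{M,\pi}_h(x_h,a_h)}{d^{M,p}_h(x_h,a_h)+\varepsilon d^{M,\pi}_h(x_h,a_h)}\big]$; admissible $L_\infty$-coverage $\Psi^M_{\infty;h,\varepsilon}(p)=\sup_{\pi\in\Pi}\sup_{(x,a)}\frac{d^{M,\pi}_h(x,a)}{d^{M,p}_h(x,a)+\varepsilon d^{M,\pi}_h(x,a)}$. *)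

theory Defs
  imports "HOL-Probability.Probability"
begin

text \<open>Layers are numbered 1..H.  init is the layer-1 state distribution, and
  trans h x a is the distribution of x_(h+1) given (x_h, a_h) = (x, a).\<close>

record ('x, 'a) mdp =
  horizon :: nat
  init :: "'x pmf"
  trans :: "nat \<Rightarrow> 'x \<Rightarrow> 'a \<Rightarrow> 'x pmf"

type_synonym ('x, 'a) policy = "nat \<Rightarrow> 'x \<Rightarrow> 'a pmf"

definition Pi_RNS :: "('x, 'a) policy set" where
  "Pi_RNS = UNIV"

text \<open>State distribution at layer (k+1).\<close>

primrec state_dist :: "('x, 'a) mdp \<Rightarrow> ('x, 'a) policy \<Rightarrow> nat \<Rightarrow> 'x pmf" where
  "state_dist M pol 0 = init M"
| "state_dist M pol (Suc k) =
     bind_pmf (state_dist M pol k)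
       (\<lambda>x. bind_pmf (pol (Suc k) x) (\<lambda>a. trans M (Suc k) x a))"

definition occ_pmf :: "('x, 'a) mdp \<Rightarrow> ('x, 'a) policy \<Rightarrow> nat \<Rightarrow> ('x \<times> 'a) pmf" where
  "occ_pmf M pol h =
     bind_pmf (state_dist M pol (h - 1)) (\<lambda>x. map_pmf (\<lambda>a. (x, a)) (pol h x))"

definition occ :: "('x, 'a) mdp \<Rightarrow> ('x, 'a) policy \<Rightarrow> nat \<Rightarrow> 'x \<times> 'a \<Rightarrow> real" where
  "occ M pol h z = pmf (occ_pmf M pol h) z"

definition occ_mix :: "('x, 'a) mdp \<Rightarrow> ('x, 'a) policy pmf \<Rightarrow> nat \<Rightarrow> 'x \<times> 'a \<Rightarrow> real" where
  "occ_mix M p h z = measure_pmf.expectation p (\<lambda>pol. occ M pol h z)"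

text \<open>Ratios are taken in ennreal: 0/0 = 0 and a/0 = \<infinity> for a > 0.\<close>

definition Cinf :: "('x, 'a) mdp \<Rightarrow> ('x, 'a) policy set \<Rightarrow> nat \<Rightarrow> ennreal" where
  "Cinf M PC h =
     (INF mu \<in> (UNIV :: ('x \<times> 'a) pmf set).
        SUP pol \<in> PC. SUP z \<in> UNIV. ennreal (occ M pol h z) / ennreal (pmf mu z))"

definition Cov :: "('x, 'a) mdp \<Rightarrow> ('x, 'a) policy set \<Rightarrow> nat \<Rightarrow> real \<Rightarrow> ennreal" where
  "Cov M PC h \<epsilon> =
     (INF p \<in> {p :: ('x, 'a) policy pmf. set_pmf p \<subseteq> PC}.
        SUP pol \<in> PC.
          \<integral>\<^sup>+ z. ennreal (occ M pol h z) / ennreal (occ_mix M p h z + \<epsilon> * occ M pol h z)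
            \<partial>(measure_pmf (occ_pmf M pol h)))"

definition Psi_inf :: "('x, 'a) mdp \<Rightarrow> ('x, 'a) policy set \<Rightarrow> nat \<Rightarrow> real
    \<Rightarrow> ('x, 'a) policy pmf \<Rightarrow> ennreal" where
  "Psi_inf M PC h \<epsilon> p =
     (SUP pol \<in> PC. SUP z \<in> UNIV.
        ennreal (occ M pol h z) / ennreal (occ_mix M p h z + \<epsilon> * occ M pol h z))"

end

theory Submission
  imports Defs
begin

definition ww :: "nat \<Rightarrow> real" where "ww n = (1/4)^(n+1)"
definition AA :: "nat \<Rightarrow> nat pmf" where
  "AA n = map_pmf (\<lambda>b. if b then Suc n else 0) (bernoulli_pmf (ww n))"
definition pp :: "nat \<Rightarrow> (nat, nat) policy" where "pp n = (\<lambda>_ _. AA n)"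
definition M0 :: "(nat, nat) mdp" where
  "M0 = \<lparr>horizon = 1, init = return_pmf 0, trans = (\<lambda>_ _ _. return_pmf 0)\<rparr>"

lemma ww_pos: "0 < ww n" and ww_le: "ww n \<le> 1/4"
proof -
  show "0 < ww n" by (simp add: ww_def)
  have "(1/4::real)^(n+1) \<le> (1/4)^1" by (rule power_decreasing) auto
  then show "ww n \<le> 1/4" by (simp add: ww_def)
qed

lemma pmf_AA: "pmf (AA n) a = (if a = Suc n then ww n else if a = 0 then 1 - ww n else 0)"
proof -
  have w: "0 \<le> ww n" "ww n \<le> 1" using ww_pos[of n] ww_le[of n] by auto
  have e: "pmf (AA n) a = measure (bernoulli_pmf (ww n)) {b. (if b then Suc n else 0) = a}"
    unfolding AA_def pmf_map vimage_def by simp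
  show ?thesis
  proof (cases "a = Suc n")
    case True
    then have s: "{b. (if b then Suc n else 0) = a} = {True}" by auto
    have b: "pmf (bernoulli_pmf (ww n)) True = ww n" using w by (rule pmf_bernoulli_True)
    have "pmf (AA n) a = ww n" unfolding e s measure_pmf_single b ..
    then show ?thesis using True by simp
  next
    case False
    show ?thesis
    proof (cases "a = 0")
      case True
      then have s: "{b. (if b then Suc n else 0) = a} = {False}" by auto
      show ?thesis unfolding e s measure_pmf_single using True w by simp
    next
      case F: False
      then have s: "{b. (if b then Suc n else 0) = a} = {}" using False by auto
      show ?thesis unfolding e s using False F by simp
    qed
  qed
qed

lemma pmf_Pair0: "pmf (map_pmf (Pair (0::nat)) A) (x, a) = (if x = 0 then pmf A a else 0)"
proof (cases "x = 0")
  case True then show ?thesis using pmf_map_inj'[of "Pair (0::nat)" A a] by (simp add: inj_def)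
next
  case False
  then have "(x, a) \<notin> set_pmf (map_pmf (Pair 0) A)" by auto
  then show ?thesis using False by (simp add: set_pmf_eq)
qed

lemma occ_M0: "occ M0 P 1 (x, a) = (if x = 0 then pmf (P 1 0) a else 0)"
proof -
  have "occ_pmf M0 P 1 = map_pmf (Pair 0) (P 1 0)"
    by (simp add: occ_pmf_def M0_def bind_return_pmf)
  then show ?thesis by (simp add: occ_def pmf_Pair0)
qed

lemma inj_pp: "inj pp"
proof
  fix m n assume "pp m = pp n"
  then have "AA m = AA n" unfolding pp_def by meson
  then have "pmf (AA m) (Suc n) = pmf (AA n) (Suc n)" by simp
  moreover have "pmf (AA n) (Suc n) = ww n" using pmf_AA[of n "Suc n"] by simp
  moreover have "pmf (AA m) (Suc n) = 0" if "m \<noteq> n" using pmf_AA[of m "Suc n"] that by simp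
  ultimately show "m = n" using ww_pos[of n] by fastforce
qed

lemma occ_pp: "occ M0 (pp n) 1 (x, a) =
  (if x = 0 then (if a = Suc n then ww n else if a = 0 then 1 - ww n else 0) else 0)"
  by (simp only: occ_M0) (simp add: pp_def pmf_AA)

lemma occ_mix_Suc:
  assumes "set_pmf p \<subseteq> range pp"
  shows "occ_mix M0 p 1 (0, Suc m) = ww m * pmf p (pp m)"
proof -
  have "occ_mix M0 p 1 (0, Suc m) = measure_pmf.expectation p (\<lambda>pol. ww m * indicator {pp m} pol)"
    unfolding occ_mix_def
  proof (intro integral_cong_AE AE_pmfI)
    fix y assume "y \<in> set_pmf p"
    then obtain n where y: "y = pp n" using assms by auto
    show "occ M0 y 1 (0, Suc m) = ww m * indicator {pp m} y"
      using inj_pp unfolding y occ_pp by (auto simp: inj_eq indicator_def)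
  qed auto
  also have "\<dots> = ww m * pmf p (pp m)"
    by (simp add: measure_pmf_single)
  finally show ?thesis .
qed

lemma occ_mix_0:
  assumes "set_pmf p \<subseteq> range pp"
  shows "3/4 \<le> occ_mix M0 p 1 (0, 0)"
  unfolding occ_mix_def
proof (rule measure_pmf.integral_ge_const)
  show "integrable (measure_pmf p) (\<lambda>pol. occ M0 pol 1 (0, 0))"
    by (rule measure_pmf.integrable_const_bound[where B=1])
       (auto simp: occ_def pmf_le_1)
  show "AE pol in measure_pmf p. 3/4 \<le> occ M0 pol 1 (0, 0)"
  proof (rule AE_pmfI)
    fix y assume "y \<in> set_pmf p"
    then obtain n where y: "y = pp n" using assms by auto
    show "3/4 \<le> occ M0 y 1 (0, 0)" unfolding y occ_pp using ww_le[of n] by simp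
  qed
qed

lemma ediv_le: "0 \<le> x \<Longrightarrow> 0 < y \<Longrightarrow> x \<le> c * y \<Longrightarrow> ennreal x / ennreal y \<le> ennreal c"
  by (simp add: divide_ennreal ennreal_leI pos_divide_le_eq)

lemma Cinf_le: "Cinf M0 (range pp) 1 \<le> 2"
proof -
  define mu where "mu = map_pmf (Pair (0::nat)) (geometric_pmf (1/2))"
  have pg: "pmf (geometric_pmf (1/2)) a = (1/2)^(Suc a)" for a
    by (simp add: pmf_geometric)
  have "(SUP pol \<in> range pp. SUP z \<in> UNIV. ennreal (occ M0 pol 1 z) / ennreal (pmf mu z)) \<le> ennreal 2"
  proof (intro SUP_least, clarify)
    fix n x a
    show "ennreal (occ M0 (pp n) 1 (x, a)) / ennreal (pmf mu (x, a)) \<le> ennreal 2"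
    proof (cases "x = 0 \<and> (a = 0 \<or> a = Suc n)")
      case False
      then have "occ M0 (pp n) 1 (x, a) = 0" unfolding occ_pp by auto
      then show ?thesis by simp
    next
      case True
      then have x: "x = 0" by simp
      have pm: "pmf mu (x, a) = (1/2)^(Suc a)" unfolding mu_def pmf_Pair0 pg using x by simp
      show ?thesis
      proof (cases "a = 0")
        case True
        show ?thesis unfolding pm occ_pp using x True ww_le[of n] ww_pos[of n]
          by (intro ediv_le) auto
      next
        case False
        then have a: "a = Suc n" using True by simp
        have q1: "(0::real) < (1/2)^(Suc n)" by simp
        have q2: "(1/2::real)^(Suc n) \<le> 1" by (rule power_le_one) auto
        note q = q1 q2
        have "ww n = ((1/2)^(Suc n)) * ((1/2)^(Suc n))"
          by (simp add: ww_def power_mult_distrib[symmetric])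
        also have "\<dots> \<le> 1 * (1/2)^(Suc n)"
          by (rule mult_right_mono[OF q(2)]) (use q in simp)
        also have "\<dots> = 2 * (1/2)^(Suc (Suc n))" by simp
        finally have "ww n \<le> 2 * (1/2)^(Suc a)" using a by simp
        then show ?thesis unfolding pm occ_pp using x a ww_pos[of n]
          by (intro ediv_le) auto
      qed
    qed
  qed
  then have "Cinf M0 (range pp) 1 \<le> ennreal 2"
    unfolding Cinf_def by (intro INF_lower2[of mu]) auto
  then show ?thesis by simp
qed

lemma Cov_le:
  assumes eps: "\<epsilon> > 0"
  shows "Cov M0 (range pp) 1 \<epsilon> \<le> 2"
proof -
  define p0 where "p0 = map_pmf pp (geometric_pmf (1/2))"
  have sp: "set_pmf p0 \<subseteq> range pp" unfolding p0_def by auto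
  have pp0: "pmf p0 (pp n) = (1/2)^(Suc n)" for n
    unfolding p0_def using pmf_map_inj'[OF inj_pp, of "geometric_pmf (1/2)" n]
    by (simp add: pmf_geometric)
  have "(SUP pol \<in> range pp.
          \<integral>\<^sup>+ z. ennreal (occ M0 pol 1 z) / ennreal (occ_mix M0 p0 1 z + \<epsilon> * occ M0 pol 1 z)
            \<partial>(measure_pmf (occ_pmf M0 pol 1))) \<le> ennreal 2"
  proof (intro SUP_least, clarify)
    fix n
    define f where "f = (\<lambda>z. ennreal (occ M0 (pp n) 1 z) /
       ennreal (occ_mix M0 p0 1 z + \<epsilon> * occ M0 (pp n) 1 z))"
    define D where "D = occ_mix M0 p0 1 (0, 0)"
    define w where "w = ww n"
    define q where "q = (1/2::real)^(Suc n)"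
    have D: "3/4 \<le> D" unfolding D_def by (rule occ_mix_0[OF sp])
    have w: "0 < w" "w \<le> 1/4" unfolding w_def using ww_pos ww_le by auto
    have wq: "w = q * q" unfolding w_def q_def ww_def by (simp add: power_mult_distrib[symmetric])
    have q1: "0 < q" unfolding q_def by simp
    have "q \<le> (1/2)^1" unfolding q_def by (rule power_decreasing) auto
    then have q2: "q \<le> 1/2" by simp
    note q = q1 q2
    have i: "(\<integral>\<^sup>+ z. f z \<partial>(measure_pmf (occ_pmf M0 (pp n) 1))) =
        (\<Sum>z\<in>{(0, 0), (0, Suc n)}. f z * pmf (occ_pmf M0 (pp n) 1) z)"
    proof (rule nn_integral_measure_pmf_support)
      fix z assume z: "z \<in> set_pmf (occ_pmf M0 (pp n) 1)" "z \<notin> {(0, 0), (0, Suc n)}"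
      obtain x a where za: "z = (x, a)" by fastforce
      have "occ M0 (pp n) 1 z = 0" using z(2) unfolding za occ_pp by auto
      then show "f z = 0" unfolding f_def by simp
    qed auto
    have o0: "occ M0 (pp n) 1 (0, 0) = 1 - w" using occ_pp[of n 0 0] unfolding w_def by simp
    have o1: "occ M0 (pp n) 1 (0, Suc n) = w" using occ_pp[of n 0 "Suc n"] unfolding w_def by simp
    have m1: "occ_mix M0 p0 1 (0, Suc n) = w * q"
      unfolding w_def q_def occ_mix_Suc[OF sp] pp0 ..
    have f0: "f (0, 0) = ennreal ((1 - w) / (D + \<epsilon> * (1 - w)))"
      unfolding f_def o0 D_def[symmetric]
      by (rule divide_ennreal) (use w D eps in \<open>auto intro!: add_pos_nonneg\<close>)
    have f1: "f (0, Suc n) = ennreal (w / (w * q + \<epsilon> * w))"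
      unfolding f_def o1 m1
      by (rule divide_ennreal) (use w q eps in \<open>auto intro!: add_pos_pos mult_pos_pos\<close>)
    have s: "(\<Sum>z\<in>{(0, 0), (0, Suc n)}. f z * pmf (occ_pmf M0 (pp n) 1) z) =
       ennreal ((1 - w) / (D + \<epsilon> * (1 - w))) * ennreal (1 - w) + ennreal (w / (w * q + \<epsilon> * w)) * ennreal w"
      using f0 f1 o0 o1 unfolding occ_def by simp
    have t1: "(1 - w) / (D + \<epsilon> * (1 - w)) * (1 - w) \<le> 4/3"
    proof -
      have Dp: "0 < D" using D by simp
      have Dp2: "D \<le> D + \<epsilon> * (1 - w)" using w eps by simp
      have "(1 - w) / (D + \<epsilon> * (1 - w)) \<le> (1 - w) / D"
        using w Dp Dp2 by (intro divide_left_mono) auto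
      also have "\<dots> \<le> 1 / D" using w D by (intro divide_right_mono) auto
      also have "\<dots> \<le> 4/3" using D by (simp add: divide_le_eq)
      finally have "(1 - w) / (D + \<epsilon> * (1 - w)) \<le> 4/3" .
      moreover have "0 \<le> (1 - w) / (D + \<epsilon> * (1 - w))" using w D eps by auto
      ultimately show ?thesis
        using mult_left_le[of "1 - w" "(1 - w) / (D + \<epsilon> * (1 - w))"] w by linarith
    qed
    have t2: "w / (w * q + \<epsilon> * w) * w \<le> 1/2"
    proof -
      have e1: "w * q + \<epsilon> * w = w * (q + \<epsilon>)" by (simp add: algebra_simps)
      have e2: "w / (w * x) * w = w / x" if "0 < x" for x
        using that w by (simp add: field_simps)
      have "w / (w * q + \<epsilon> * w) * w = w / (q + \<epsilon>)" unfolding e1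
        using q eps by (intro e2) auto
      also have "\<dots> \<le> w / q" using w q eps by (intro divide_left_mono) auto
      also have "\<dots> = q" using wq q by simp
      finally show ?thesis using q by linarith
    qed
    have "(\<integral>\<^sup>+ z. f z \<partial>(measure_pmf (occ_pmf M0 (pp n) 1))) =
       ennreal ((1 - w) / (D + \<epsilon> * (1 - w)) * (1 - w) + w / (w * q + \<epsilon> * w) * w)"
    proof -
      define A where "A = (1 - w) / (D + \<epsilon> * (1 - w))"
      define B where "B = w / (w * q + \<epsilon> * w)"
      have a0: "0 \<le> A" unfolding A_def using w D eps by auto
      have b0: "0 \<le> B" unfolding B_def using w q eps by auto
      have "ennreal (A * (1 - w) + B * w) = ennreal (A * (1 - w)) + ennreal (B * w)"
        by (rule ennreal_plus) (use a0 b0 w in auto)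
      also have "\<dots> = ennreal A * ennreal (1 - w) + ennreal B * ennreal w"
        using a0 b0 w by (simp add: ennreal_mult)
      finally show ?thesis unfolding i s A_def B_def by simp
    qed
    also have "\<dots> \<le> ennreal 2" using t1 t2 by (intro ennreal_leI) simp
    finally show "(\<integral>\<^sup>+ z. f z \<partial>(measure_pmf (occ_pmf M0 (pp n) 1))) \<le> ennreal 2" .
  qed
  then have "Cov M0 (range pp) 1 \<epsilon> \<le> ennreal 2"
    unfolding Cov_def using sp by (intro INF_lower2[of p0]) auto
  then show ?thesis by simp
qed

lemma small_mass:
  assumes "0 < (\<delta>::real)"
  shows "\<exists>m. pmf p (pp m) < \<delta>"
proof (rule ccontr)
  assume "\<not> ?thesis"
  then have h: "\<delta> \<le> pmf p (pp m)" for m by (simp add: not_less)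
  obtain N :: nat where N: "1 / \<delta> < real N" using reals_Archimedean2 by blast
  have "real N * \<delta> = (\<Sum>m<N. \<delta>)" by simp
  also have "\<dots> \<le> (\<Sum>m<N. pmf p (pp m))" by (intro sum_mono h)
  also have "\<dots> = sum (pmf p) (pp ` {..<N})"
    using sum.reindex[OF inj_on_subset[OF inj_pp subset_UNIV, of "{..<N}"], of "pmf p"]
    by (simp add: o_def)
  also have "\<dots> = measure (measure_pmf p) (pp ` {..<N})"
    by (simp add: measure_measure_pmf_finite)
  also have "\<dots> \<le> 1" by simp
  finally have "real N * \<delta> \<le> 1" .
  moreover have "1 < real N * \<delta>" using N assms by (simp add: divide_less_eq)
  ultimately show False by simp
qed

lemma Psi_lower:
  assumes sp: "set_pmf p \<subseteq> range pp" and eps: "0 \<le> \<epsilon>" and r: "0 \<le> r" "r * \<epsilon> < 1"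
  shows "ennreal r < Psi_inf M0 (range pp) 1 \<epsilon> p"
proof -
  define \<delta> where "\<delta> = (1 - r * \<epsilon>) / (r + 1)"
  have dpos: "0 < \<delta>" unfolding \<delta>_def using r by auto
  obtain m where m: "pmf p (pp m) < \<delta>" using small_mass[OF dpos] by blast
  define pm where "pm = pmf p (pp m)"
  define w where "w = ww m"
  have w: "0 < w" unfolding w_def by (rule ww_pos)
  have pm0: "0 \<le> pm" unfolding pm_def by simp
  have "r * pm \<le> r * \<delta>" using m r unfolding pm_def by (intro mult_left_mono) auto
  also have "r * \<delta> < 1 - r * \<epsilon>"
    unfolding \<delta>_def using r by (simp add: field_simps)
  finally have key: "r * (pm + \<epsilon>) < 1" by (simp add: algebra_simps)
  have o1: "occ M0 (pp m) 1 (0, Suc m) = w" using occ_pp[of m 0 "Suc m"] unfolding w_def by simp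
  have m1: "occ_mix M0 p 1 (0, Suc m) = w * pm"
    unfolding w_def pm_def occ_mix_Suc[OF sp] ..
  have g: "ennreal r < ennreal w / ennreal (w * pm + \<epsilon> * w)"
  proof (cases "w * pm + \<epsilon> * w = 0")
    case True
    then show ?thesis using w by simp
  next
    case False
    then have pos: "0 < w * pm + \<epsilon> * w" using w pm0 eps
      by (metis add_nonneg_nonneg less_eq_real_def mult_nonneg_nonneg)
    have "r * (w * pm + \<epsilon> * w) < w"
      using key w by (simp add: algebra_simps)
       (metis mult.commute mult.left_commute mult_strict_left_mono mult_1_right distrib_left)
    then have "r < w / (w * pm + \<epsilon> * w)" using pos by (simp add: less_divide_eq)
    then show ?thesis using pos w r by (simp add: divide_ennreal ennreal_less_iff)
  qed
  also have "\<dots> = ennreal (occ M0 (pp m) 1 (0, Suc m)) /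
      ennreal (occ_mix M0 p 1 (0, Suc m) + \<epsilon> * occ M0 (pp m) 1 (0, Suc m))"
    by (simp only: o1 m1)
  also have "\<dots> \<le> Psi_inf M0 (range pp) 1 \<epsilon> p"
    unfolding Psi_inf_def
    by (intro SUP_upper2[of "pp m"] SUP_upper2[of "(0, Suc m)"]) auto
  finally show ?thesis .
qed

lemma ennreal_le_from_below:
  assumes "\<And>r::real. 0 \<le> r \<Longrightarrow> ennreal r < x \<Longrightarrow> ennreal r < y"
  shows "x \<le> (y::ennreal)"
proof (rule dense_le)
  fix z assume z: "z < x"
  then obtain r where "0 \<le> r" "z = ennreal r" by (cases z) auto
  then show "z \<le> y" using assms z by (simp add: less_imp_le)
qed

theorem proposition7p3:
  shows "\<exists>(M :: (nat, nat) mdp) (PC :: (nat, nat) policy set).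
     horizon M = 1 \<and> PC \<noteq> {} \<and> PC \<subseteq> Pi_RNS \<and>
     Cinf M PC 1 \<le> 2 \<and>
     (\<forall>\<epsilon>>0. Cov M PC 1 \<epsilon> \<le> 2) \<and>
     (\<forall>\<epsilon>>0. (INF p \<in> {p. set_pmf p \<subseteq> PC}. Psi_inf M PC 1 \<epsilon> p) \<ge> ennreal (1 / \<epsilon>)) \<and>
     (INF p \<in> {p. set_pmf p \<subseteq> PC}. Psi_inf M PC 1 0 p) = \<infinity>"
proof (intro exI conjI allI impI)
  show "horizon M0 = 1" by (simp add: M0_def)
  show "range pp \<noteq> {}" by simp
  show "range pp \<subseteq> Pi_RNS" by (simp add: Pi_RNS_def)
  show "Cinf M0 (range pp) 1 \<le> 2" by (rule Cinf_le)
  show "Cov M0 (range pp) 1 \<epsilon> \<le> 2" if "\<epsilon> > 0" for \<epsilon> using that by (rule Cov_le)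
  show "ennreal (1 / \<epsilon>) \<le> (INF p \<in> {p. set_pmf p \<subseteq> range pp}. Psi_inf M0 (range pp) 1 \<epsilon> p)"
    if eps: "\<epsilon> > 0" for \<epsilon>
  proof (intro INF_greatest ennreal_le_from_below)
    fix p and r :: real assume p: "p \<in> {p. set_pmf p \<subseteq> range pp}" and r: "0 \<le> r" "ennreal r < ennreal (1 / \<epsilon>)"
    have "r < 1 / \<epsilon>" using r by (simp add: ennreal_less_iff)
    then have "r * \<epsilon> < 1" using eps by (simp add: less_divide_eq)
    then show "ennreal r < Psi_inf M0 (range pp) 1 \<epsilon> p"
      using p eps r by (intro Psi_lower) auto
  qed
  show "(INF p \<in> {p. set_pmf p \<subseteq> range pp}. Psi_inf M0 (range pp) 1 0 p) = \<infinity>"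
  proof (rule antisym)
    show "(INF p \<in> {p. set_pmf p \<subseteq> range pp}. Psi_inf M0 (range pp) 1 0 p) \<le> \<infinity>" by simp
  next
    show "\<infinity> \<le> (INF p \<in> {p. set_pmf p \<subseteq> range pp}. Psi_inf M0 (range pp) 1 0 p)"
  proof (intro INF_greatest ennreal_le_from_below)
    fix p and r :: real assume p: "p \<in> {p. set_pmf p \<subseteq> range pp}" and r: "0 \<le> r"
    then show "ennreal r < Psi_inf M0 (range pp) 1 0 p"
      by (intro Psi_lower) auto
  qed
  qed
qed

end
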